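(* Let $\Omega:=\{(z_1,z_2)\in\mathbb{R}^2: z_1>0\}$ and define on $\Omega$ the vector fields \[ r_1(z_1,z_2)=\Big(\tfrac{z_2-\sqrt{z_2^2+4z_1}}{2},\,1\Big),\qquad r_2(z_1,z_2)=\Big(\tfrac{z_2+\sqrt{z_2^2+4z_1}}{2},\,1\Big). \] There exists a global diffeomorphism $w=(w_1,w_2):\Omega\to w(\Omega)\subset\mathbb{R}^2$ such that on $\Omega$, \[ \nabla w_i\cdot r_i=0\quad(i=1,2),\qquad \frac{\partial w_1}{\partial z_1}>0,\qquad \frac{\partial w_2}{\partial z_1}<0. \]
   Context: $r_1,r_2$ are the eigenvectors of the matrix $\begin{pmatrix} z_2 & z_1\\ 1 & 0\end{pmatrix}$ corresponding to the eigenvalues $\frac{z_2\mp\sqrt{z_2^2+4z_1}}{2}$. *)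

theory Defs
  imports "HOL-Analysis.Analysis"
begin

definition Omega :: "(real \<times> real) set" where
  "Omega = {z. fst z > 0}"

definition r1 :: "real \<times> real \<Rightarrow> real \<times> real" where
  "r1 z = ((snd z - sqrt ((snd z)^2 + 4 * fst z)) / 2, 1)"

definition r2 :: "real \<times> real \<Rightarrow> real \<times> real" where
  "r2 z = ((snd z + sqrt ((snd z)^2 + 4 * fst z)) / 2, 1)"

definition C1_map_on :: "('a::real_normed_vector) set \<Rightarrow> ('a \<Rightarrow> 'b::real_normed_vector) \<Rightarrow> bool" where
  "C1_map_on S f \<longleftrightarrow> (\<exists>f'. (\<forall>x\<in>S. (f has_derivative blinfun_apply (f' x)) (at x)) \<and> continuous_on S f')"

definition diffeomorphism_onto :: "('a::real_normed_vector) set \<Rightarrow> ('b::real_normed_vector) set \<Rightarrow> ('a \<Rightarrow> 'b) \<Rightarrow> bool" where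
  "diffeomorphism_onto S T f \<longleftrightarrow> open S \<and> open T \<and> bij_betw f S T \<and> C1_map_on S f \<and> C1_map_on T (inv_into S f)"

end

theory Submission
  imports Defs "HOL-Analysis.Analysis"
begin


lemma C1_intro:
  fixes f :: "'a::euclidean_space \<Rightarrow> 'b::real_normed_vector"
  assumes "\<And>x. x \<in> S \<Longrightarrow> (f has_derivative D x) (at x)"
    and "\<And>i. i \<in> Basis \<Longrightarrow> continuous_on S (\<lambda>x. D x i)"
  shows "C1_map_on S f"
proof -
  have bl: "\<And>x. x \<in> S \<Longrightarrow> blinfun_apply (Blinfun (D x)) = D x"
    using assms(1) by (meson bounded_linear_Blinfun_apply has_derivative_bounded_linear)
  show ?thesis unfolding C1_map_on_def
  proof (intro exI[of _ "\<lambda>x. Blinfun (D x)"] conjI ballI)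
    fix x assume "x \<in> S" then show "(f has_derivative blinfun_apply (Blinfun (D x))) (at x)"
      using assms(1) bl by simp
  next
    show "continuous_on S (\<lambda>x. Blinfun (D x))"
      apply (rule continuous_on_blinfun_componentwise)
      apply (rule continuous_on_eq[OF assms(2)])
      using bl by auto
  qed
qed

lemma C1_transfer:
  assumes "open S" "C1_map_on S f" "\<And>x. x \<in> S \<Longrightarrow> f x = g x"
  shows "C1_map_on S g"
  using assms unfolding C1_map_on_def
  by (metis has_derivative_transform_within_open)

lemma C1_compose:
  assumes "C1_map_on S f" "C1_map_on T g" "f ` S \<subseteq> T"
  shows "C1_map_on S (g \<circ> f)"
proof -
  obtain f' where f': "\<forall>x\<in>S. (f has_derivative blinfun_apply (f' x)) (at x)" "continuous_on S f'"
    using assms(1) unfolding C1_map_on_def by blast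
  obtain g' where g': "\<forall>x\<in>T. (g has_derivative blinfun_apply (g' x)) (at x)" "continuous_on T g'"
    using assms(2) unfolding C1_map_on_def by blast
  have cf: "continuous_on S f"
    using f'(1) by (meson continuous_at_imp_continuous_on has_derivative_continuous)
  show ?thesis unfolding C1_map_on_def
  proof (intro exI[of _ "\<lambda>x. g' (f x) o\<^sub>L f' x"] conjI ballI)
    fix x assume x: "x \<in> S"
    have "((g \<circ> f) has_derivative (blinfun_apply (g' (f x)) \<circ> blinfun_apply (f' x))) (at x)"
      apply (rule diff_chain_at)
      using x f'(1) g'(1) assms(3) by auto
    then show "((g \<circ> f) has_derivative blinfun_apply (g' (f x) o\<^sub>L f' x)) (at x)"
      by (simp add: comp_def blinfun_apply_blinfun_compose[abs_def])
  next
    have "continuous_on S (g' \<circ> f)"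
      by (rule continuous_on_compose[OF cf continuous_on_subset[OF g'(2) assms(3)]])
    then show "continuous_on S (\<lambda>x. g' (f x) o\<^sub>L f' x)"
      using f'(2) by (auto intro!: continuous_intros simp: comp_def)
  qed
qed

lemma diffeo_intro:
  assumes "open S" "open T" "f ` S \<subseteq> T" "g ` T \<subseteq> S"
    "\<And>x. x \<in> S \<Longrightarrow> g (f x) = x" "\<And>y. y \<in> T \<Longrightarrow> f (g y) = y"
    "C1_map_on S f" "C1_map_on T g"
  shows "diffeomorphism_onto S T f"
proof -
  have bij: "bij_betw f S T"
    by (rule bij_betw_byWitness[where f'=g]) (use assms in auto)
  have "\<And>y. y \<in> T \<Longrightarrow> g y = inv_into S f y"
    using assms by (metis bij bij_betw_inv_into_left image_subset_iff)
  then have "C1_map_on T (inv_into S f)"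
    using C1_transfer assms by blast
  then show ?thesis unfolding diffeomorphism_onto_def using assms bij by blast
qed

lemma diffeo_compose:
  assumes "diffeomorphism_onto S T f" "diffeomorphism_onto T U g"
  shows "diffeomorphism_onto S U (g \<circ> f)"
proof -
  have b1: "bij_betw f S T" and b2: "bij_betw g T U" using assms unfolding diffeomorphism_onto_def by auto
  show ?thesis
  proof (rule diffeo_intro[where g="inv_into S f \<circ> inv_into T g"])
    show "open S" "open U" using assms unfolding diffeomorphism_onto_def by auto
    show "(g \<circ> f) ` S \<subseteq> U" using b1 b2 by (auto simp: bij_betw_def)
    show "(inv_into S f \<circ> inv_into T g) ` U \<subseteq> S"
      using b1 b2 by (auto simp: bij_betw_def inv_into_into)
    show "\<And>x. x \<in> S \<Longrightarrow> (inv_into S f \<circ> inv_into T g) ((g \<circ> f) x) = x"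
      using b1 b2 by (auto simp: bij_betw_def)
    show "\<And>y. y \<in> U \<Longrightarrow> (g \<circ> f) ((inv_into S f \<circ> inv_into T g) y) = y"
      using b1 b2 by (auto simp: bij_betw_def f_inv_into_f inv_into_into)
    show "C1_map_on S (g \<circ> f)"
      using assms b1 by (intro C1_compose) (auto simp: diffeomorphism_onto_def bij_betw_def)
    show "C1_map_on U (inv_into S f \<circ> inv_into T g)"
      using assms b1 b2 by (intro C1_compose) (auto simp: diffeomorphism_onto_def bij_betw_def inv_into_into)
  qed
qed



definition Qc :: "complex set" where "Qc = {z. 0 < Re z \<and> 0 < Im z}"
definition Tc :: "complex set" where "Tc = {z. Re z < 0 \<or> 0 < Im z}"
definition cr :: "complex \<Rightarrow> complex" where
  "cr z = exp (\<i> * of_real (pi/4)) * exp (Ln (exp (- \<i> * of_real (3*pi/4)) * z) / 3)"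

lemma open_Qc: "open Qc"
  unfolding Qc_def by (intro open_Collect_conj open_Collect_less continuous_intros)
lemma open_Tc: "open Tc"
  unfolding Tc_def by (intro open_Collect_disj open_Collect_less continuous_intros)

lemma cube_in: assumes "z \<in> Qc" shows "z^3 \<in> Tc"
proof -
  obtain b a where z: "z = Complex b a" by (cases z)
  have ab: "b > 0" "a > 0" using assms z by (auto simp: Qc_def)
  have "Re (z^3) = b^3 - 3*a^2*b" "Im (z^3) = 3*a*b^2 - a^3"
    by (simp_all add: z power3_eq_cube power2_eq_square algebra_simps)
  moreover have "b^3 - 3*a^2*b < 0 \<or> 0 < 3*a*b^2 - a^3"
  proof (rule ccontr)
    assume "\<not> ?thesis"
    then have h1: "a^3 \<ge> 3*a*b^2" and h2: "b^3 \<ge> 3*a^2*b" by auto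
    from h1 ab have "a^2 \<ge> 3*b^2" by (simp add: power2_eq_square power3_eq_cube)
    moreover from h2 ab have "b^2 \<ge> 3*a^2" by (simp add: power2_eq_square power3_eq_cube)
    ultimately show False using ab by (smt (verit) zero_less_power)
  qed
  ultimately show ?thesis by (simp add: Tc_def)
qed

lemma cr_cube: assumes "z \<in> Qc" shows "cr (z^3) = z"
proof -
  have z0: "z \<noteq> 0" using assms by (auto simp: Qc_def)
  define L where "L = Ln z"
  have zL: "z = exp L" using z0 by (simp add: L_def)
  have iml: "0 < Im L" "Im L < pi/2"
    using assms Im_Ln_pos_lt_imp Re_Ln_pos_lt_imp[of z] by (auto simp: Qc_def L_def)
  have "exp (- \<i> * of_real (3*pi/4)) * z^3 = exp (3*L - \<i> * of_real (3*pi/4))"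
  proof -
    have "exp (3*L - \<i> * of_real (3*pi/4)) = exp (3*L) * exp (- \<i> * of_real (3*pi/4))"
      by (metis diff_conv_add_uminus exp_add mult_minus_left)
    moreover have "exp (3*L) = z^3" using exp_of_nat_mult[of 3 L] zL by simp
    ultimately show ?thesis by simp
  qed
  moreover have "Ln (exp (3*L - \<i> * of_real (3*pi/4))) = 3*L - \<i> * of_real (3*pi/4)"
    using iml by (intro Ln_exp) auto
  ultimately have "cr (z^3) = exp (\<i> * of_real (pi/4)) * exp ((3*L - \<i> * of_real (3*pi/4))/3)"
    by (simp add: cr_def)
  also have "\<dots> = exp (\<i> * of_real (pi/4) + (3*L - \<i> * of_real (3*pi/4))/3)"
    by (simp only: exp_add)
  also have "\<i> * of_real (pi/4) + (3*L - \<i> * of_real (3*pi/4))/3 = L"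
    by (simp add: field_simps)
  finally show ?thesis using zL by simp
qed



lemma c34: "cos (3*pi/4) < 0" "sin (3*pi/4) > 0"
proof -
  have e: "3*pi/4 = pi - pi/4" by simp
  have "cos (pi/4) > 0" by (rule cos_gt_zero_pi) (use pi_gt_zero in auto)
  then show "cos (3*pi/4) < 0" unfolding e cos_pi_minus by simp
  show "sin (3*pi/4) > 0" by (rule sin_gt_zero) (use pi_gt_zero in auto)
qed

lemma trig1: assumes "- pi < y" "y \<le> -(3*pi/4)"
  shows "cos (y + 3*pi/4) > 0" "sin (y + 3*pi/4) \<le> 0"
proof -
  show "cos (y + 3*pi/4) > 0" by (rule cos_gt_zero_pi) (use assms in auto)
  have "0 \<le> sin (-(y + 3*pi/4))" by (rule sin_ge_zero) (use assms in auto)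
  then show "sin (y + 3*pi/4) \<le> 0" using sin_minus[of "y + 3*pi/4"] by linarith
qed

lemma trig2: assumes "pi > y" "y \<ge> 3*pi/4"
  shows "cos (y + 3*pi/4) \<ge> 0" "sin (y + 3*pi/4) < 0"
proof -
  define p where "p = y + 3*pi/4 - 2*pi"
  have e: "y + 3*pi/4 = p + 2*pi" by (simp add: p_def)
  have "cos p \<ge> 0" by (rule cos_ge_zero) (use assms in \<open>auto simp: p_def\<close>)
  then show "cos (y + 3*pi/4) \<ge> 0" by (simp add: e)
  have "0 < sin (-p)" by (rule sin_gt_zero) (use assms in \<open>auto simp: p_def\<close>)
  then show "sin (y + 3*pi/4) < 0" by (simp add: e)
qed

lemma Tc_nonpos: assumes "z \<in> Tc" shows "exp (- \<i> * of_real (3*pi/4)) * z \<notin> \<real>\<^sub>\<le>\<^sub>0"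
proof
  assume "exp (- \<i> * of_real (3*pi/4)) * z \<in> \<real>\<^sub>\<le>\<^sub>0"
  then obtain t where t: "t \<le> 0" "exp (- \<i> * of_real (3*pi/4)) * z = of_real t"
    by (auto elim!: nonpos_Reals_cases)
  then have "z = exp (\<i> * of_real (3*pi/4)) * of_real t"
    by (metis (no_types, lifting) exp_minus_inverse mult.left_commute mult.right_neutral mult_minus_left)
  then have "Re z = cos (3*pi/4) * t" "Im z = sin (3*pi/4) * t"
    by (simp_all add: Re_exp Im_exp)
  moreover have "cos (3*pi/4) * t \<ge> 0" using mult_nonpos_nonpos[of "cos (3*pi/4)" t] c34 t by linarith
  moreover have "sin (3*pi/4) * t \<le> 0" using mult_nonneg_nonpos[of "sin (3*pi/4)" t] c34 t by linarith
  ultimately show False using assms by (auto simp: Tc_def)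
qed

lemma cr_props: assumes "z \<in> Tc" shows "cr z \<in> Qc" "(cr z)^3 = z"
proof -
  define c where "c = exp (- \<i> * of_real (3*pi/4))"
  define L where "L = Ln (c * z)"
  have z0: "z \<noteq> 0" using assms by (auto simp: Tc_def)
  have c0: "c \<noteq> 0" by (simp add: c_def)
  have np: "c * z \<notin> \<real>\<^sub>\<le>\<^sub>0" using Tc_nonpos[OF assms] by (simp add: c_def)
  have eL: "exp L = c * z" using z0 c0 by (simp add: L_def)
  have y: "- pi < Im L" "Im L < pi"
    using np by (auto simp: L_def intro: mpi_less_Im_Ln Im_Ln_less_pi)
  have zL: "z = exp (L + \<i> * of_real (3*pi/4))"
  proof -
    have "exp (\<i> * of_real (3*pi/4)) * c = exp (\<i> * of_real (3*pi/4) + - \<i> * of_real (3*pi/4))"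
      by (simp only: c_def exp_add)
    also have "\<dots> = 1" by simp
    finally have "exp (\<i> * of_real (3*pi/4)) * c = 1" .
    then have "z = exp (\<i> * of_real (3*pi/4)) * (c * z)" by (simp add: mult.assoc[symmetric])
    then show ?thesis by (simp add: exp_add eL mult.commute)
  qed
  have y2: "\<bar>Im L\<bar> < 3*pi/4"
  proof (rule ccontr)
    assume "\<not> ?thesis"
    then have "Im L \<le> -(3*pi/4) \<or> Im L \<ge> 3*pi/4" by auto
    moreover have "Re z = exp (Re L) * cos (Im L + 3*pi/4)" "Im z = exp (Re L) * sin (Im L + 3*pi/4)"
      by (subst zL, simp add: Re_exp Im_exp)+
    moreover have "cos (Im L + 3*pi/4) \<ge> 0 \<and> sin (Im L + 3*pi/4) \<le> 0"
      using calculation(1) trig1[of "Im L"] trig2[of "Im L"] y by force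
    ultimately have "Re z \<ge> 0" "Im z \<le> 0"
      by (simp_all add: mult_nonneg_nonpos)
    then show False using assms by (auto simp: Tc_def)
  qed
  have crL: "cr z = exp (\<i> * of_real (pi/4) + L/3)"
    by (simp add: cr_def c_def L_def exp_add)
  have "Re (cr z) = exp (Re L / 3) * cos (pi/4 + Im L / 3)" "Im (cr z) = exp (Re L / 3) * sin (pi/4 + Im L / 3)"
    by (simp_all add: crL Re_exp Im_exp)
  moreover have "cos (pi/4 + Im L / 3) > 0" by (rule cos_gt_zero_pi) (use y2 in auto)
  moreover have "sin (pi/4 + Im L / 3) > 0" by (rule sin_gt_zero) (use y2 in auto)
  ultimately show "cr z \<in> Qc" by (simp add: Qc_def)
  have "(cr z)^3 = exp (3 * (\<i> * of_real (pi/4) + L/3))"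
    unfolding crL using exp_of_nat_mult[of 3 "\<i> * of_real (pi/4) + L/3"] by simp
  also have "3 * (\<i> * of_real (pi/4) + L/3) = L + \<i> * of_real (3*pi/4)"
    by (simp add: field_simps)
  finally show "(cr z)^3 = z" using zL by simp
qed



lemma cr_deriv: assumes "z \<in> Tc" shows "(cr has_field_derivative cr z / (3*z)) (at z)"
proof -
  define c where "c = exp (- \<i> * of_real (3*pi/4))"
  have np: "c * z \<notin> \<real>\<^sub>\<le>\<^sub>0" using Tc_nonpos[OF assms] by (simp add: c_def)
  have z0: "z \<noteq> 0" using assms by (auto simp: Tc_def)
  have e: "cr = (\<lambda>z. exp (\<i> * of_real (pi/4)) * exp (Ln (c * z) / 3))"
    by (simp add: cr_def[abs_def] c_def)
  have d1: "((\<lambda>z. Ln (c*z)) has_field_derivative inverse (c*z) * c) (at z)"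
    by (rule DERIV_chain2[where f=Ln and g="\<lambda>z. c*z", OF has_field_derivative_Ln[OF np]]) simp
  have d2: "((\<lambda>z. Ln (c*z) / 3) has_field_derivative inverse (c*z) * c / 3) (at z)"
    by (rule DERIV_cdivide[OF d1])
  have d3: "((\<lambda>z. exp (Ln (c*z) / 3)) has_field_derivative exp (Ln (c*z) / 3) * (inverse (c*z) * c / 3)) (at z)"
    by (rule DERIV_chain2[OF DERIV_exp d2])
  have d4: "((\<lambda>z. exp (\<i> * of_real (pi/4)) * exp (Ln (c*z) / 3)) has_field_derivative
       exp (\<i> * of_real (pi/4)) * (exp (Ln (c*z) / 3) * (inverse (c*z) * c / 3))) (at z)"
    by (rule DERIV_cmult[OF d3])
  have c0: "c \<noteq> 0" by (simp add: c_def)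
  show ?thesis unfolding e
    apply (rule DERIV_cong[OF d4])
    using z0 c0 by (simp add: cr_def c_def field_simps)
qed

lemma cont_cr: "continuous_on Tc cr"
proof -
  have "\<And>z. z \<in> Tc \<Longrightarrow> isCont cr z"
    using cr_deriv DERIV_isCont by blast
  then show ?thesis by (simp add: continuous_at_imp_continuous_on)
qed

lemma diffeo_cube: "diffeomorphism_onto Qc Tc (\<lambda>z. z^3)"
proof (rule diffeo_intro[where g=cr])
  show "open Qc" "open Tc" by (rule open_Qc, rule open_Tc)
  show "(\<lambda>z. z^3) ` Qc \<subseteq> Tc" using cube_in by auto
  show "cr ` Tc \<subseteq> Qc" using cr_props by auto
  show "\<And>x. x \<in> Qc \<Longrightarrow> cr (x^3) = x" by (rule cr_cube)
  show "\<And>y. y \<in> Tc \<Longrightarrow> (cr y)^3 = y" using cr_props by auto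
  show "C1_map_on Qc (\<lambda>z. z^3)"
  proof (rule C1_intro[where D="\<lambda>z h. (3*z^2) * h"])
    fix x assume "x \<in> Qc"
    show "((\<lambda>z. z^3) has_derivative (\<lambda>h. (3*x^2) * h)) (at x)"
    proof -
      have "((\<lambda>z. z^3) has_field_derivative of_nat 3 * (1 * x ^ (3 - Suc 0))) (at x)"
        by (rule DERIV_power[OF DERIV_ident])
      then show ?thesis unfolding has_field_derivative_def by (rule has_derivative_eq_rhs) (auto simp: fun_eq_iff power2_eq_square)
    qed
  next
    fix i :: complex
    show "continuous_on Qc (\<lambda>x. (3*x^2) * i)" by (intro continuous_intros)
  qed
  show "C1_map_on Tc cr"
  proof (rule C1_intro[where D="\<lambda>z h. (cr z / (3*z)) * h"])
    fix x assume "x \<in> Tc"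
    then show "(cr has_derivative (\<lambda>h. (cr x / (3*x)) * h)) (at x)"
      using cr_deriv[of x] unfolding has_field_derivative_def by (metis (no_types, lifting) has_derivative_eq_rhs)
  next
    fix i :: complex
    show "continuous_on Tc (\<lambda>x. (cr x / (3*x)) * i)"
      by (intro continuous_intros cont_cr) (auto simp: Tc_def)
  qed
qed



definition sq :: "real \<times> real \<Rightarrow> real" where "sq z = sqrt ((snd z)^2 + 4 * fst z)"
definition Af :: "real \<times> real \<Rightarrow> real" where "Af z = sqrt ((sq z - snd z) / 2)"
definition Bf :: "real \<times> real \<Rightarrow> real" where "Bf z = sqrt ((sq z + snd z) / 2)"

lemma sq_facts: assumes "z \<in> Omega"
  shows "sq z > \<bar>snd z\<bar>" "(sq z)^2 = (snd z)^2 + 4 * fst z" "sq z > 0"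
proof -
  have p: "fst z > 0" using assms by (simp add: Omega_def)
  show e: "(sq z)^2 = (snd z)^2 + 4 * fst z" unfolding sq_def using p
    by (simp add: add_pos_nonneg)
  have "sqrt ((snd z)^2) < sq z" unfolding sq_def using p by (intro real_sqrt_less_mono) simp
  then show "sq z > \<bar>snd z\<bar>" by simp
  then show "sq z > 0" by linarith
qed

lemma AB_facts: assumes "z \<in> Omega"
  shows "Af z > 0" "Bf z > 0" "(Af z)^2 = (sq z - snd z)/2" "(Bf z)^2 = (sq z + snd z)/2"
    "sq z = (Af z)^2 + (Bf z)^2" "snd z = (Bf z)^2 - (Af z)^2" "fst z = (Af z)^2 * (Bf z)^2"
proof -
  note s = sq_facts[OF assms]
  show a2: "(Af z)^2 = (sq z - snd z)/2" "(Bf z)^2 = (sq z + snd z)/2"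
    unfolding Af_def Bf_def using s(1) by auto
  show "Af z > 0" "Bf z > 0" unfolding Af_def Bf_def using s(1) by auto
  show "sq z = (Af z)^2 + (Bf z)^2" "snd z = (Bf z)^2 - (Af z)^2" using a2 by auto
  have "(Af z)^2 * (Bf z)^2 = ((sq z)^2 - (snd z)^2)/4" unfolding a2 by (simp add: field_simps power2_eq_square)
  then show "fst z = (Af z)^2 * (Bf z)^2" using s(2) by (simp add: field_simps)
qed

lemma sq_deriv: assumes "z \<in> Omega"
  shows "(sq has_derivative (\<lambda>h. (2 * fst h + snd z * snd h) / sq z)) (at z)"
proof -
  note s = sq_facts[OF assms]
  have pos: "(snd z)^2 + 4 * fst z > 0" using s(2) s(3) by (metis zero_less_power)
  have g: "((\<lambda>z. (snd z)^2 + 4 * fst z) has_derivative (\<lambda>h. 2 * snd z * snd h + 4 * fst h)) (at z)"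
    by (rule has_derivative_eq_rhs, (auto intro!: derivative_eq_intros)[1]) (simp add: fun_eq_iff)
  have "(sq has_derivative (\<lambda>h. (2 * snd z * snd h + 4 * fst h) * (inverse (sqrt ((snd z)^2 + 4 * fst z)) / 2))) (at z)"
    unfolding sq_def[abs_def] by (rule has_derivative_real_sqrt[OF pos g])
  then show ?thesis
    apply (rule has_derivative_eq_rhs)
    using s(3) unfolding sq_def[symmetric] by (simp add: fun_eq_iff field_simps)
qed

lemma A_deriv: assumes "z \<in> Omega"
  shows "(Af has_derivative (\<lambda>h. fst h / (2 * Af z * sq z) - Af z * snd h / (2 * sq z))) (at z)"
proof -
  note s = sq_facts[OF assms] and ab = AB_facts[OF assms]
  have pos: "(sq z - snd z)/2 > 0" using s(1) by (simp add: abs_less_iff)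
  have e: "snd z = sq z - 2*(Af z)^2" using ab(3) by simp
  have g: "((\<lambda>z. (sq z - snd z)/2) has_derivative (\<lambda>h. ((2 * fst h + snd z * snd h) / sq z - snd h)/2)) (at z)"
    by (rule has_derivative_eq_rhs, (auto intro!: derivative_eq_intros sq_deriv[OF assms])[1]) (simp add: fun_eq_iff)
  have "(Af has_derivative (\<lambda>h. ((2 * fst h + snd z * snd h) / sq z - snd h)/2 * (inverse (sqrt ((sq z - snd z)/2)) / 2))) (at z)"
    unfolding Af_def[abs_def] by (rule has_derivative_real_sqrt[OF pos g])
  then show ?thesis
    apply (rule has_derivative_eq_rhs)
    using s(3) ab(1) unfolding Af_def[symmetric] by (simp add: fun_eq_iff field_simps e power2_eq_square)
qed

lemma B_deriv: assumes "z \<in> Omega"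
  shows "(Bf has_derivative (\<lambda>h. fst h / (2 * Bf z * sq z) + Bf z * snd h / (2 * sq z))) (at z)"
proof -
  note s = sq_facts[OF assms] and ab = AB_facts[OF assms]
  have pos: "(sq z + snd z)/2 > 0" using s(1) by (simp add: abs_less_iff)
  have e: "snd z = 2*(Bf z)^2 - sq z" using ab(4) by simp
  have g: "((\<lambda>z. (sq z + snd z)/2) has_derivative (\<lambda>h. ((2 * fst h + snd z * snd h) / sq z + snd h)/2)) (at z)"
    by (rule has_derivative_eq_rhs, (auto intro!: derivative_eq_intros sq_deriv[OF assms])[1]) (simp add: fun_eq_iff)
  have "(Bf has_derivative (\<lambda>h. ((2 * fst h + snd z * snd h) / sq z + snd h)/2 * (inverse (sqrt ((sq z + snd z)/2)) / 2))) (at z)"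
    unfolding Bf_def[abs_def] by (rule has_derivative_real_sqrt[OF pos g])
  then show ?thesis
    apply (rule has_derivative_eq_rhs)
    using s(3) ab(2) unfolding Bf_def[symmetric] by (simp add: fun_eq_iff field_simps e power2_eq_square)
qed


definition Q2 :: "(real \<times> real) set" where "Q2 = {p. 0 < fst p \<and> 0 < snd p}"
definition fA :: "real \<times> real \<Rightarrow> real \<times> real" where "fA z = (Bf z, Af z)"
definition gA :: "real \<times> real \<Rightarrow> real \<times> real" where
  "gA p = ((fst p)^2 * (snd p)^2, (fst p)^2 - (snd p)^2)"

lemma open_Omega: "open Omega"
  unfolding Omega_def by (intro open_Collect_less continuous_intros)
lemma open_Q2: "open Q2"
  unfolding Q2_def by (intro open_Collect_conj open_Collect_less continuous_intros)

lemma cont_sq: "continuous_on Omega sq"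
  using sq_deriv by (meson continuous_at_imp_continuous_on has_derivative_continuous)
lemma cont_Af: "continuous_on Omega Af"
  using A_deriv by (meson continuous_at_imp_continuous_on has_derivative_continuous)
lemma cont_Bf: "continuous_on Omega Bf"
  using B_deriv by (meson continuous_at_imp_continuous_on has_derivative_continuous)

lemma fA_gA: assumes "p \<in> Q2" shows "fA (gA p) = p"
proof -
  obtain b a where p: "p = (b, a)" by (cases p)
  have ab: "b > 0" "a > 0" using assms p by (auto simp: Q2_def)
  have "(b^2 - a^2)^2 + 4 * (b^2 * a^2) = (b^2 + a^2)^2" by (simp add: power2_eq_square algebra_simps)
  then have s: "sq (b^2 * a^2, b^2 - a^2) = b^2 + a^2" by (simp add: sq_def)
  have g: "gA p = (b^2 * a^2, b^2 - a^2)" by (simp add: gA_def p)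
  have "Af (b^2 * a^2, b^2 - a^2) = a" using ab unfolding Af_def s by simp
  moreover have "Bf (b^2 * a^2, b^2 - a^2) = b" using ab unfolding Bf_def s by simp
  ultimately show ?thesis unfolding fA_def g using p by simp
qed

lemma diffeo_A: "diffeomorphism_onto Omega Q2 fA"
proof (rule diffeo_intro[where g=gA])
  show "open Omega" "open Q2" by (rule open_Omega, rule open_Q2)
  show "fA ` Omega \<subseteq> Q2" using AB_facts(1,2) by (auto simp: fA_def Q2_def)
  show "gA ` Q2 \<subseteq> Omega" by (auto simp: gA_def Q2_def Omega_def)
  show "\<And>x. x \<in> Omega \<Longrightarrow> gA (fA x) = x"
  proof -
    fix x assume x: "x \<in> Omega"
    show "gA (fA x) = x" using AB_facts(6,7)[OF x] by (simp add: gA_def fA_def prod_eq_iff)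
  qed
  show "\<And>y. y \<in> Q2 \<Longrightarrow> fA (gA y) = y" by (rule fA_gA)
  show "C1_map_on Omega fA"
  proof (rule C1_intro[where D="\<lambda>z h. (fst h / (2 * Bf z * sq z) + Bf z * snd h / (2 * sq z),
                                         fst h / (2 * Af z * sq z) - Af z * snd h / (2 * sq z))"])
    fix x assume "x \<in> Omega"
    then show "(fA has_derivative (\<lambda>h. (fst h / (2 * Bf x * sq x) + Bf x * snd h / (2 * sq x),
                                         fst h / (2 * Af x * sq x) - Af x * snd h / (2 * sq x)))) (at x)"
      unfolding fA_def[abs_def] by (intro has_derivative_Pair B_deriv A_deriv)
  next
    fix i :: "real \<times> real"
    show "continuous_on Omega (\<lambda>z. (fst i / (2 * Bf z * sq z) + Bf z * snd i / (2 * sq z),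
                                         fst i / (2 * Af z * sq z) - Af z * snd i / (2 * sq z)))"
    proof -
      have n1: "\<forall>x\<in>Omega. 2 * Bf x * sq x \<noteq> 0" using AB_facts(2) sq_facts(3) by fastforce
      have n2: "\<forall>x\<in>Omega. 2 * Af x * sq x \<noteq> 0" using AB_facts(1) sq_facts(3) by fastforce
      have n3: "\<forall>x\<in>Omega. 2 * sq x \<noteq> 0" using sq_facts(3) by fastforce
      show ?thesis
        by (intro continuous_on_Pair continuous_on_add continuous_on_diff continuous_on_divide
          continuous_on_mult continuous_on_const cont_sq cont_Af cont_Bf n1 n2 n3)
    qed
  qed
  show "C1_map_on Q2 gA"
  proof (rule C1_intro[where D="\<lambda>p h. (2 * fst p * fst h * (snd p)^2 + (fst p)^2 * 2 * snd p * snd h,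
                                        2 * fst p * fst h - 2 * snd p * snd h)"])
    fix x assume "x \<in> Q2"
    show "(gA has_derivative (\<lambda>h. (2 * fst x * fst h * (snd x)^2 + (fst x)^2 * 2 * snd x * snd h,
                                        2 * fst x * fst h - 2 * snd x * snd h))) (at x)"
      unfolding gA_def[abs_def]
      by (rule has_derivative_eq_rhs, (auto intro!: derivative_eq_intros)[1]) (simp add: fun_eq_iff algebra_simps)
  next
    fix i :: "real \<times> real"
    show "continuous_on Q2 (\<lambda>p. (2 * fst p * fst i * (snd p)^2 + (fst p)^2 * 2 * snd p * snd i,
                                        2 * fst p * fst i - 2 * snd p * snd i))"
      by (intro continuous_intros)
  qed
qed


lemma C1_linear: fixes f :: "'a::euclidean_space \<Rightarrow> 'b::real_normed_vector" assumes "bounded_linear f" shows "C1_map_on S f"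
  by (rule C1_intro[where D="\<lambda>x. f"]) (auto intro: bounded_linear_imp_has_derivative[OF assms])

definition Ec :: "real \<times> real \<Rightarrow> complex" where "Ec p = Complex (fst p) (snd p)"
definition Pc :: "complex \<Rightarrow> real \<times> real" where "Pc z = (Im z, Re z)"
definition U :: "(real \<times> real) set" where "U = {p. 0 < fst p \<or> snd p < 0}"

lemma bl_Ec: "bounded_linear Ec"
  unfolding linear_conv_bounded_linear[symmetric] linear_iff
  by (auto simp: Ec_def complex_eq_iff)
lemma bl_Pc: "bounded_linear Pc"
  unfolding Pc_def[abs_def] by (intro bounded_linear_Pair bounded_linear_Re bounded_linear_Im)
lemma bl_Eci: "bounded_linear (\<lambda>z. (Re z, Im z))"
  by (intro bounded_linear_Pair bounded_linear_Re bounded_linear_Im)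
lemma bl_Pci: "bounded_linear (\<lambda>p::real\<times>real. Complex (snd p) (fst p))"
  unfolding linear_conv_bounded_linear[symmetric] linear_iff
  by (auto simp: complex_eq_iff)

lemma diffeo_E: "diffeomorphism_onto Q2 Qc Ec"
  apply (rule diffeo_intro[where g="\<lambda>z. (Re z, Im z)"])
  using open_Q2 open_Qc C1_linear bl_Ec bl_Eci by (auto simp: Q2_def Qc_def Ec_def)

lemma open_U: "open U"
  unfolding U_def by (intro open_Collect_disj open_Collect_less continuous_intros)

lemma diffeo_P: "diffeomorphism_onto Tc U Pc"
  apply (rule diffeo_intro[where g="\<lambda>p. Complex (snd p) (fst p)"])
  using open_Tc open_U C1_linear bl_Pc bl_Pci by (auto simp: Tc_def U_def Pc_def)

definition wmap :: "real \<times> real \<Rightarrow> real \<times> real" where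
  "wmap z = (3 * Af z * (Bf z)^2 - (Af z)^3, (Bf z)^3 - 3 * (Af z)^2 * Bf z)"

lemma wmap_eq: "wmap = Pc \<circ> ((\<lambda>z. z^3) \<circ> (Ec \<circ> fA))"
  by (auto simp: fun_eq_iff wmap_def Pc_def Ec_def fA_def power2_eq_square power3_eq_cube algebra_simps)

lemma diffeo_w: "diffeomorphism_onto Omega U wmap"
  unfolding wmap_eq
  by (rule diffeo_compose[OF diffeo_compose[OF diffeo_compose[OF diffeo_A diffeo_E] diffeo_cube] diffeo_P])

lemma hl1: fixes a b ss p q :: real assumes "a>0" "b>0" "ss = a^2+b^2"
  shows "(3*b^2 - 3*a^2) * (p/(2*a* ss) - a*q/(2* ss)) + 6*a*b*(p/(2*b* ss) + b*q/(2* ss)) = 3/(2*a)*p + 3*a/2*q"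
proof -
  have s0: "ss > 0" using assms by (simp add: add_pos_pos)
  have "(3*b^2 - 3*a^2) * (p/(2*a* ss) - a*q/(2* ss)) + 6*a*b*(p/(2*b* ss) + b*q/(2* ss))
      = (3*(a^2+b^2)*p + 3*a^2*(a^2+b^2)*q) / (2*a* ss)"
    using assms(1,2) s0 by (simp add: field_simps power2_eq_square)
  also have "\<dots> = (3 * ss * p + 3*a^2 * ss * q) / (2*a* ss)" by (simp add: assms(3))
  also have "\<dots> = 3/(2*a)*p + 3*a/2*q"
    using assms(1,2) s0 by (simp add: field_simps power2_eq_square)
  finally show ?thesis .
qed
lemma hl2: fixes a b ss p q :: real assumes "a>0" "b>0" "ss = a^2+b^2"
  shows "(3*b^2 - 3*a^2) * (p/(2*b* ss) + b*q/(2* ss)) - 6*a*b*(p/(2*a* ss) - a*q/(2* ss)) = - 3/(2*b)*p + 3*b/2*q"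
proof -
  have s0: "ss > 0" using assms by (simp add: add_pos_pos)
  have "(3*b^2 - 3*a^2) * (p/(2*b* ss) + b*q/(2* ss)) - 6*a*b*(p/(2*a* ss) - a*q/(2* ss))
      = (- 3*(a^2+b^2)*p + 3*b^2*(a^2+b^2)*q) / (2*b* ss)"
    using assms(1,2) s0 by (simp add: field_simps power2_eq_square)
  also have "\<dots> = (- 3 * ss * p + 3*b^2 * ss * q) / (2*b* ss)" by (simp add: assms(3))
  also have "\<dots> = - 3/(2*b)*p + 3*b/2*q"
    using assms(1,2) s0 by (simp add: field_simps power2_eq_square)
  finally show ?thesis .
qed

lemma w_deriv: assumes "z \<in> Omega"
  shows "(wmap has_derivative (\<lambda>h. (3 / (2 * Af z) * fst h + 3 * Af z / 2 * snd h,
                                    - 3 / (2 * Bf z) * fst h + 3 * Bf z / 2 * snd h))) (at z)"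
proof -
  note s = sq_facts[OF assms] and ab = AB_facts[OF assms]
  show ?thesis unfolding wmap_def[abs_def]
    apply (rule has_derivative_eq_rhs)
     apply ((auto intro!: derivative_eq_intros A_deriv[OF assms] B_deriv[OF assms])[1])
    apply (simp only: fun_eq_iff)
    apply (rule allI)
    subgoal for x
    apply (simp only: prod_eq_iff fst_conv snd_conv)
    apply (rule conjI)
     apply (rule trans[OF _ hl1[OF ab(1,2) ab(5), of "fst x" "snd x"]])
     apply (simp add: algebra_simps power2_eq_square power3_eq_cube)
    apply (rule trans[OF _ hl2[OF ab(1,2) ab(5), of "fst x" "snd x"]])
    apply (simp add: algebra_simps power2_eq_square power3_eq_cube)
    done
    done
qed

theorem lemma3p1:
  shows "\<exists>w :: real \<times> real \<Rightarrow> real \<times> real.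
           diffeomorphism_onto Omega (w ` Omega) w \<and>
           (\<forall>z\<in>Omega. \<exists>W. (w has_derivative W) (at z) \<and>
               fst (W (r1 z)) = 0 \<and> snd (W (r2 z)) = 0 \<and>
               fst (W (1, 0)) > 0 \<and> snd (W (1, 0)) < 0)"
proof (rule exI[of _ wmap], intro conjI ballI)
  have "wmap ` Omega = U" using diffeo_w unfolding diffeomorphism_onto_def bij_betw_def by blast
  then show "diffeomorphism_onto Omega (wmap ` Omega) wmap" using diffeo_w by simp
next
  fix z assume z: "z \<in> Omega"
  note s = sq_facts[OF z] and ab = AB_facts[OF z]
  have r1: "r1 z = (uminus ((Af z)^2), 1)" unfolding r1_def sq_def[symmetric] ab(3) by (simp add: field_simps)
  have r2: "r2 z = ((Bf z)^2, 1)" unfolding r2_def sq_def[symmetric] ab(4) by simp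
  show "\<exists>W. (wmap has_derivative W) (at z) \<and>
               fst (W (r1 z)) = 0 \<and> snd (W (r2 z)) = 0 \<and>
               fst (W (1, 0)) > 0 \<and> snd (W (1, 0)) < 0"
  proof -
    define W where "W = (\<lambda>h::real\<times>real. (3 / (2 * Af z) * fst h + 3 * Af z / 2 * snd h,
                                    - 3 / (2 * Bf z) * fst h + 3 * Bf z / 2 * snd h))"
    have d: "(wmap has_derivative W) (at z)" unfolding W_def by (rule w_deriv[OF z])
    have e1: "fst (W (r1 z)) = 0" using ab(1) by (simp add: W_def r1 field_simps power2_eq_square)
    have e2: "snd (W (r2 z)) = 0" using ab(2) by (simp add: W_def r2 field_simps power2_eq_square)
    have e3: "fst (W (1, 0)) > 0" using ab(1) by (simp add: W_def)
    have e4: "snd (W (1, 0)) < 0" using ab(2) by (simp add: W_def)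
    show ?thesis using d e1 e2 e3 e4 by blast
  qed
qed
end
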